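(* Let $G$ be a group, let $\pi:(0,1]\to(0,1]$ be non-decreasing with $\pi(\gamma)\to0$ as $\gamma\to0$, and let $M=(\mu_n)_{n=1}^\infty$ be a sequence of probability measures on $G$ that detects index uniformly at rate $\pi$. Let $\alpha\in(0,1]$ and suppose $\textup{dc}_M(G)\ge\alpha$. Let $\gamma\in(0,1)$ be such that $\pi(\gamma)<\alpha$, and let $X=\{x\in G:[G:C_G(x)]\le\frac{1}{\gamma}\}$. Then $\limsup_{n\to\infty}\mu_n(X)\ge\alpha-\pi(\gamma)$.
   Context: $M$ detects index uniformly at rate $\pi$ if for every $\varepsilon>0$ there exists $N$ such that for every $m\in\mathbb{N}$ and every subgroup $H$ with $[G:H]\ge m$ (possibly infinite) we have $\mu_n(H)\le\pi(\frac1m)+\varepsilon$ for all $n\ge N$. $\textup{dc}_M(G)=\limsup_n(\mu_n\times\mu_n)(\{(x,y):xy=yx\})$. $C_G(x)$ is the centraliser of $x$. *)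

theory Defs
  imports "HOL-Probability.Probability" "HOL-Algebra.Coset"
begin

definition gindex :: "('a, 'b) monoid_scheme \<Rightarrow> 'a set \<Rightarrow> ereal" where
  "gindex G H = (if finite (rcosets\<^bsub>G\<^esub> H) then ereal (real (card (rcosets\<^bsub>G\<^esub> H))) else \<infinity>)"

definition centraliser :: "('a, 'b) monoid_scheme \<Rightarrow> 'a \<Rightarrow> 'a set" where
  "centraliser G x = {y \<in> carrier G. x \<otimes>\<^bsub>G\<^esub> y = y \<otimes>\<^bsub>G\<^esub> x}"

definition detects_index_uniformly ::
  "('a, 'b) monoid_scheme \<Rightarrow> (nat \<Rightarrow> 'a measure) \<Rightarrow> (real \<Rightarrow> real) \<Rightarrow> bool" where
  "detects_index_uniformly G M \<pi> \<longleftrightarrow>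
     (\<forall>\<epsilon>>0. \<exists>N. \<forall>m::nat. m \<ge> 1 \<longrightarrow> (\<forall>H. subgroup H G \<and> gindex G H \<ge> ereal (real m) \<longrightarrow>
        (\<forall>n\<ge>N. measure (M n) H \<le> \<pi> (1 / real m) + \<epsilon>)))"

definition dc :: "('a, 'b) monoid_scheme \<Rightarrow> (nat \<Rightarrow> 'a measure) \<Rightarrow> ereal" where
  "dc G M = limsup (\<lambda>n. ereal (measure (M n \<Otimes>\<^sub>M M n)
       {(x, y). x \<in> carrier G \<and> y \<in> carrier G \<and> x \<otimes>\<^bsub>G\<^esub> y = y \<otimes>\<^bsub>G\<^esub> x}))"

end

theory Submission
  imports Defs
begin

lemma pair_bound:
  assumes P: "prob_space N" and sp: "space N = A" and se: "sets N = Pow A"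
    and b: "\<forall>x\<in>A. x \<notin> X \<longrightarrow> measure N (C x) \<le> c" and c: "c \<ge> 0" and XA: "X \<subseteq> A"
    and CS: "\<forall>x\<in>A. Pair x -` S = C x"
  shows "measure (N \<Otimes>\<^sub>M N) S \<le> measure N X + c"
proof (cases "S \<in> sets (N \<Otimes>\<^sub>M N)")
  case True
  interpret prob_space N by fact
  interpret PP: prob_space "N \<Otimes>\<^sub>M N" by (intro prob_space_pair P)
  have XS: "X \<in> sets N" using XA se by auto
  have "emeasure (N \<Otimes>\<^sub>M N) S = (\<integral>\<^sup>+x. emeasure N (Pair x -` S) \<partial>N)"
    by (rule emeasure_pair_measure_alt[OF True])
  also have "\<dots> \<le> (\<integral>\<^sup>+x. indicator X x + ennreal c \<partial>N)"
  proof (rule nn_integral_mono)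
    fix x assume x: "x \<in> space N"
    hence xA: "x \<in> A" using sp by simp
    show "emeasure N (Pair x -` S) \<le> indicator X x + ennreal c"
    proof (cases "x \<in> X")
      case True
      have "emeasure N (Pair x -` S) \<le> 1" by (rule emeasure_le_1)
      thus ?thesis using True by (simp add: add_increasing2)
    next
      case False
      have "emeasure N (Pair x -` S) = ennreal (measure N (C x))"
        using CS xA by (simp add: emeasure_eq_measure)
      also have "\<dots> \<le> ennreal c" using b xA False by (simp add: ennreal_leI)
      finally show ?thesis using False by simp
    qed
  qed
  also have "\<dots> = emeasure N X + ennreal c"
    using XS by (simp add: nn_integral_add emeasure_space_1)
  also have "\<dots> = ennreal (measure N X + c)"
    using c by (simp add: emeasure_eq_measure ennreal_plus)
  finally have "ennreal (measure (N \<Otimes>\<^sub>M N) S) \<le> ennreal (measure N X + c)"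
    by (simp only: PP.emeasure_eq_measure)
  thus ?thesis using c by (simp add: ennreal_le_iff del: ennreal_plus)
next
  case False
  thus ?thesis using c by (simp add: measure_notin_sets)
qed


lemma (in group) centraliser_subgroup:
  assumes x: "x \<in> carrier G"
  shows "subgroup (centraliser G x) G"
proof (rule subgroupI)
  show "centraliser G x \<subseteq> carrier G" unfolding centraliser_def by auto
  show "centraliser G x \<noteq> {}" using x unfolding centraliser_def by auto
next
  fix a assume "a \<in> centraliser G x"
  hence a: "a \<in> carrier G" and e: "x \<otimes> a = a \<otimes> x" unfolding centraliser_def by auto
  have "x \<otimes> inv a = inv a \<otimes> (a \<otimes> x) \<otimes> inv a"
    using a x by (simp add: m_assoc[symmetric])
  also have "\<dots> = inv a \<otimes> (x \<otimes> a) \<otimes> inv a" using e by simp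
  also have "\<dots> = inv a \<otimes> x" using a x by (simp add: m_assoc)
  finally show "inv a \<in> centraliser G x" using a unfolding centraliser_def by auto
next
  fix a b assume "a \<in> centraliser G x" "b \<in> centraliser G x"
  hence a: "a \<in> carrier G" and ea: "x \<otimes> a = a \<otimes> x"
    and b: "b \<in> carrier G" and eb: "x \<otimes> b = b \<otimes> x" unfolding centraliser_def by auto
  have "x \<otimes> (a \<otimes> b) = (x \<otimes> a) \<otimes> b" using a b x by (simp add: m_assoc)
  also have "\<dots> = a \<otimes> (x \<otimes> b)" using a b x ea by (simp add: m_assoc)
  also have "\<dots> = (a \<otimes> b) \<otimes> x" using a b x eb by (simp add: m_assoc)
  finally show "a \<otimes> b \<in> centraliser G x" using a b unfolding centraliser_def by auto
qed

lemma gindex_ge: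
  assumes "\<not> gindex G H \<le> ereal r" "r > 0"
  shows "gindex G H \<ge> ereal (real (nat \<lfloor>r\<rfloor> + 1))"
proof (cases "finite (rcosets\<^bsub>G\<^esub> H)")
  case True
  let ?k = "card (rcosets\<^bsub>G\<^esub> H)"
  have "r < real ?k" using assms True unfolding gindex_def by auto
  hence "\<lfloor>r\<rfloor> < int ?k" by linarith
  hence "real (nat \<lfloor>r\<rfloor> + 1) \<le> real ?k" using assms by linarith
  thus ?thesis using True unfolding gindex_def by simp
next
  case False thus ?thesis unfolding gindex_def by simp
qed

theorem proposition2p1:
  fixes G :: "('a, 'b) monoid_scheme" and \<pi> :: "real \<Rightarrow> real"
    and M :: "nat \<Rightarrow> 'a measure" and \<alpha> \<gamma> :: real
  assumes "group G"
    and "\<forall>t\<in>{0<..1}. \<pi> t \<in> {0<..1}"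
    and "mono_on {0<..1} \<pi>"
    and "(\<pi> \<longlongrightarrow> 0) (at_right 0)"
    and "\<forall>n. prob_space (M n) \<and> space (M n) = carrier G \<and> sets (M n) = Pow (carrier G)"
    and "detects_index_uniformly G M \<pi>"
    and "\<alpha> \<in> {0<..1}"
    and "dc G M \<ge> ereal \<alpha>"
    and "\<gamma> \<in> {0<..<1}"
    and "\<pi> \<gamma> < \<alpha>"
  shows "limsup (\<lambda>n. ereal (measure (M n)
           {x \<in> carrier G. gindex G (centraliser G x) \<le> ereal (1 / \<gamma>)}))
         \<ge> ereal (\<alpha> - \<pi> \<gamma>)"
proof -
  let ?X = "{x \<in> carrier G. gindex G (centraliser G x) \<le> ereal (1 / \<gamma>)}"
  let ?S = "{(x, y). x \<in> carrier G \<and> y \<in> carrier G \<and> x \<otimes>\<^bsub>G\<^esub> y = y \<otimes>\<^bsub>G\<^esub> x}"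
  let ?c = "\<pi> \<gamma>"
  define m where "m = nat \<lfloor>1 / \<gamma>\<rfloor> + 1"
  have g: "0 < \<gamma>" "\<gamma> < 1" using assms(9) by auto
  have m1: "m \<ge> 1" unfolding m_def by simp
  have "real m > 1 / \<gamma>" unfolding m_def by linarith
  hence "1 < real m * \<gamma>" using g by (simp add: divide_less_eq)
  hence mg: "1 / real m < \<gamma>" using g m1 by (simp add: divide_less_eq mult.commute)
  have mpos: "0 < 1 / real m" using m1 by simp
  have pim: "\<pi> (1 / real m) \<le> ?c"
  proof (rule mono_onD[OF assms(3)])
    show "1 / real m \<in> {0<..1}" using mpos mg g by simp
    show "\<gamma> \<in> {0<..1}" using g by simp
    show "1 / real m \<le> \<gamma>" using mg by simp
  qed
  have "\<gamma> \<in> {0<..1}" using g by simp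
  hence cpos: "?c > 0" using assms(2) by simp
  have key: "\<exists>N. \<forall>n\<ge>N. measure (M n \<Otimes>\<^sub>M M n) ?S \<le> measure (M n) ?X + (?c + e)" if e: "e > 0" for e
  proof -
    obtain N where N: "\<forall>m::nat. m \<ge> 1 \<longrightarrow> (\<forall>H. subgroup H G \<and> gindex G H \<ge> ereal (real m) \<longrightarrow>
        (\<forall>n\<ge>N. measure (M n) H \<le> \<pi> (1 / real m) + e))"
      using assms(6) e unfolding detects_index_uniformly_def by (elim allE[where x=e] impE exE) auto
    show ?thesis
    proof (intro exI allI impI)
      fix n assume n: "n \<ge> N"
      show "measure (M n \<Otimes>\<^sub>M M n) ?S \<le> measure (M n) ?X + (?c + e)"
      proof (rule pair_bound[where C = "centraliser G"])
        show "prob_space (M n)" "space (M n) = carrier G" "sets (M n) = Pow (carrier G)"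
          using assms(5) by auto
        show "0 \<le> ?c + e" using cpos e by simp
        show "?X \<subseteq> carrier G" by auto
        show "\<forall>x\<in>carrier G. Pair x -` ?S = centraliser G x"
          unfolding centraliser_def by auto
        show "\<forall>x\<in>carrier G. x \<notin> ?X \<longrightarrow> measure (M n) (centraliser G x) \<le> ?c + e"
        proof (intro ballI impI)
          fix x assume x: "x \<in> carrier G" "x \<notin> ?X"
          have sg: "subgroup (centraliser G x) G"
            using group.centraliser_subgroup[OF assms(1) x(1)] .
          have "gindex G (centraliser G x) \<ge> ereal (real m)"
            unfolding m_def using gindex_ge[of G "centraliser G x" "1/\<gamma>"] x g by auto
          hence "measure (M n) (centraliser G x) \<le> \<pi> (1 / real m) + e"
            using N[rule_format, OF m1, of "centraliser G x"] sg n by simp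
          thus "measure (M n) (centraliser G x) \<le> ?c + e" using pim by linarith
        qed
      qed
    qed
  qed
  let ?a = "\<lambda>n. ereal (measure (M n \<Otimes>\<^sub>M M n) ?S)"
  let ?b = "\<lambda>n. ereal (measure (M n) ?X)"
  have lim: "ereal \<alpha> \<le> limsup ?b + ereal (?c + e)" if e: "e > 0" for e
  proof -
    obtain N where N: "\<forall>n\<ge>N. measure (M n \<Otimes>\<^sub>M M n) ?S \<le> measure (M n) ?X + (?c + e)"
      using key[OF e] by blast
    have "ereal \<alpha> \<le> limsup ?a" using assms(8) unfolding dc_def by simp
    also have "\<dots> \<le> limsup (\<lambda>n. ?b n + ereal (?c + e))"
    proof (rule Limsup_mono)
      show "\<forall>\<^sub>F n in sequentially. ?a n \<le> ?b n + ereal (?c + e)"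
        using N by (auto simp: eventually_sequentially)
    qed
    also have "\<dots> \<le> limsup ?b + limsup (\<lambda>n. ereal (?c + e))"
      by (rule ereal_limsup_add_mono)
    also have "limsup (\<lambda>n. ereal (?c + e)) = ereal (?c + e)"
      by (simp add: Limsup_const)
    finally show ?thesis .
  qed
  show ?thesis
  proof (cases "limsup ?b")
    case (real l)
    have "\<alpha> - ?c \<le> l"
    proof (rule field_le_epsilon)
      fix e :: real assume "0 < e"
      from lim[OF this] real show "\<alpha> - ?c \<le> l + e" by simp
    qed
    thus ?thesis using real by simp
  next
    case PInf thus ?thesis by simp
  next
    case MInf
    from lim[of 1] MInf show ?thesis by simp
  qed
qed

end
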